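(* For $n=2$, $DCell_1$ is Hamiltonian but not Hamiltonian-connected. The same holds for every Generalized $DCell_1$ with $n=2$.
   Context: $DCell_0$ is the complete graph $K_n$ ($t_0=n$ vertices). $DCell_1$ consists of $t_0+1$ vertex-disjoint copies $D_0^0,\dots,D_0^{t_0}$ of $K_n$, with vertices of each copy numbered $0,\dots,n-1$, and for each pair $a<b$ the vertex numbered $b-1$ of $D_0^a$ is joined to the vertex numbered $a$ of $D_0^b$. A Generalized $DCell_1$ uses instead any set of edges between the copies such that each pair of distinct copies is joined by exactly one edge and each vertex is incident with exactly one such edge. A graph is Hamiltonian-connected if every two distinct vertices are the endpoints of a Hamiltonian path. *)

theory Defs
  imports Main
begin

(* Simple graphs: vertex set V, edge set E of 2-element sets {u,v}. *)

definition ham_path :: "'a set \<Rightarrow> 'a set set \<Rightarrow> 'a list \<Rightarrow> bool" where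
  "ham_path V E p \<longleftrightarrow> distinct p \<and> set p = V \<and>
     (\<forall>i. Suc i < length p \<longrightarrow> {p ! i, p ! Suc i} \<in> E)"

(* Hamiltonian: has a Hamiltonian cycle (a cycle has at least 3 vertices) *)
definition hamiltonian :: "'a set \<Rightarrow> 'a set set \<Rightarrow> bool" where
  "hamiltonian V E \<longleftrightarrow> (\<exists>p. ham_path V E p \<and> 3 \<le> length p \<and> {last p, hd p} \<in> E)"

definition ham_connected :: "'a set \<Rightarrow> 'a set set \<Rightarrow> bool" where
  "ham_connected V E \<longleftrightarrow>
     (\<forall>u\<in>V. \<forall>v\<in>V. u \<noteq> v \<longrightarrow> (\<exists>p. ham_path V E p \<and> hd p = u \<and> last p = v))"

(* DCell_1 built from t_0 + 1 = n + 1 copies of K_n; vertex (a,i) = vertex i of copy D_0^a *)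
definition dcell1_V :: "nat \<Rightarrow> (nat \<times> nat) set" where
  "dcell1_V n = {(a, i). a \<le> n \<and> i < n}"

definition dcell1_intra :: "nat \<Rightarrow> (nat \<times> nat) set set" where
  "dcell1_intra n = {{(a, i), (a, j)} | a i j. a \<le> n \<and> i < n \<and> j < n \<and> i \<noteq> j}"

definition dcell1_cross :: "nat \<Rightarrow> (nat \<times> nat) set set" where
  "dcell1_cross n = {{(a, b - 1), (b, a)} | a b. a < b \<and> b \<le> n}"

definition dcell1_E :: "nat \<Rightarrow> (nat \<times> nat) set set" where
  "dcell1_E n = dcell1_intra n \<union> dcell1_cross n"

definition gen_dcell1_cross :: "nat \<Rightarrow> (nat \<times> nat) set set \<Rightarrow> bool" where
  "gen_dcell1_cross n X \<longleftrightarrow>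
     X \<subseteq> {{u, v} | u v. u \<in> dcell1_V n \<and> v \<in> dcell1_V n \<and> fst u \<noteq> fst v} \<and>
     (\<forall>a b. a \<le> n \<and> b \<le> n \<and> a \<noteq> b \<longrightarrow>
        (\<exists>!e. e \<in> X \<and> (\<exists>u v. e = {u, v} \<and> fst u = a \<and> fst v = b))) \<and>
     (\<forall>v\<in>dcell1_V n. \<exists>!e. e \<in> X \<and> v \<in> e)"

end

theory Submission
  imports Defs
begin

lemma cyc_ham:
  assumes "distinct [a,b,c,d,g,f]" "V = set [a,b,c,d,g,f]"
    "{a,b} \<in> E" "{b,c} \<in> E" "{c,d} \<in> E" "{d,g} \<in> E" "{g,f} \<in> E" "{f,a} \<in> E"
  shows "hamiltonian V E"
  unfolding hamiltonian_def ham_path_def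
proof (intro exI[of _ "[a,b,c,d,g,f]"] conjI allI impI)
  fix i assume "Suc i < length [a,b,c,d,g,f]"
  then have "i = 0 \<or> i = 1 \<or> i = 2 \<or> i = 3 \<or> i = 4" by auto
  then show "{[a,b,c,d,g,f] ! i, [a,b,c,d,g,f] ! Suc i} \<in> E" using assms by auto
qed (use assms in auto)

lemma not_hc:
  assumes "a \<in> V" "c \<in> V" "b \<in> V" "a \<noteq> c" "b \<noteq> a" "b \<noteq> c" "4 \<le> card V" "finite V"
    "\<And>x. x \<noteq> b \<Longrightarrow> {x,b} \<in> E \<Longrightarrow> x = a \<or> x = c"
  shows "\<not> ham_connected V E"
proof
  assume "ham_connected V E"
  then obtain p where hp: "ham_path V E p" "hd p = a" "last p = c"
    using assms unfolding ham_connected_def by blast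
  have dp: "distinct p" and sp: "set p = V"
    and ed: "\<And>i. Suc i < length p \<Longrightarrow> {p ! i, p ! Suc i} \<in> E"
    using hp(1) unfolding ham_path_def by auto
  have len: "length p = card V" using dp sp distinct_card by fastforce
  have pne: "p \<noteq> []" using len assms by auto
  have p0: "p ! 0 = a" using hp pne by (simp add: hd_conv_nth)
  have pl: "p ! (length p - 1) = c" using hp pne by (simp add: last_conv_nth)
  obtain k where k: "k < length p" "p ! k = b" using assms sp by (metis in_set_conv_nth)
  have k0: "k \<noteq> 0" using k p0 assms(5) by (metis)
  have kl: "k \<noteq> length p - 1" using k pl assms by auto
  have e1: "{p ! (k-1), b} \<in> E" using ed[of "k-1"] k k0 by auto
  have n1: "p ! (k-1) \<noteq> b" using dp k k0 nth_eq_iff_index_eq[of p "k-1" k] by auto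
  have "p ! (k-1) = a \<or> p ! (k-1) = c" using assms(9)[OF n1 e1] .
  then have "k - 1 = 0"
    using dp k k0 kl p0 pl nth_eq_iff_index_eq[of p "k-1" "length p - 1"]
      nth_eq_iff_index_eq[of p "k-1" 0] pne by fastforce
  have e2: "{p ! (k+1), b} \<in> E" using ed[of k] k kl by (auto simp: insert_commute)
  have n2: "p ! (k+1) \<noteq> b" using dp k kl nth_eq_iff_index_eq[of p "k+1" k] by auto
  have "p ! (k+1) = a \<or> p ! (k+1) = c" using assms(9)[OF n2 e2] .
  then have "k + 1 = length p - 1"
    using dp k k0 kl p0 pl nth_eq_iff_index_eq[of p "k+1" "length p - 1"]
      nth_eq_iff_index_eq[of p "k+1" 0] pne by fastforce
  with \<open>k - 1 = 0\<close> k0 len assms(7) show False by auto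
qed

lemma V2: "dcell1_V 2 = {(0,0),(0,1),(1,0),(1,1),(2,0),(2,1)}"
  unfolding dcell1_V_def by auto

lemma inV: "x \<in> dcell1_V 2 \<longleftrightarrow> fst x \<le> 2 \<and> snd x < 2"
  unfolding dcell1_V_def by (cases x) auto

lemma card_V2: "card (dcell1_V 2) = 6" unfolding V2 by simp

lemma intra_mem: "{x,y} \<in> dcell1_intra 2 \<longleftrightarrow>
   fst x = fst y \<and> fst x \<le> 2 \<and> snd x < 2 \<and> snd y < 2 \<and> x \<noteq> y"
proof
  assume "{x,y} \<in> dcell1_intra 2"
  then obtain a i j where h: "{x,y} = {(a,i),(a,j)}" "a \<le> 2" "i < 2" "j < 2" "i \<noteq> j"
    unfolding dcell1_intra_def by blast
  then have "(x = (a,i) \<and> y = (a,j)) \<or> (x = (a,j) \<and> y = (a,i))"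
    by (simp add: doubleton_eq_iff)
  with h show "fst x = fst y \<and> fst x \<le> 2 \<and> snd x < 2 \<and> snd y < 2 \<and> x \<noteq> y" by auto
next
  assume h: "fst x = fst y \<and> fst x \<le> 2 \<and> snd x < 2 \<and> snd y < 2 \<and> x \<noteq> y"
  then have "{x,y} = {(fst x, snd x), (fst x, snd y)}" "snd x \<noteq> snd y"
    by (metis prod.collapse, metis prod.collapse)
  with h show "{x,y} \<in> dcell1_intra 2" unfolding dcell1_intra_def by blast
qed
lemma ab_cases: "(a::nat) < b \<Longrightarrow> b \<le> 2 \<Longrightarrow> (a = 0 \<and> b = 1) \<or> (a = 0 \<and> b = 2) \<or> (a = 1 \<and> b = 2)"
  by auto

lemma cross2: "dcell1_cross 2 = {{(0,0),(1,0)},{(0,1),(2,0)},{(1,1),(2,1)}}"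
proof (rule set_eqI, rule iffI)
  fix e assume "e \<in> dcell1_cross 2"
  then obtain a b where "e = {(a, b - 1), (b, a)}" "a < b" "b \<le> 2"
    unfolding dcell1_cross_def by blast
  show "e \<in> {{(0,0),(1,0)},{(0,1),(2,0)},{(1,1),(2,1)}}"
  proof -
    from ab_cases[OF \<open>a < b\<close> \<open>b \<le> 2\<close>] \<open>e = _\<close>
    show ?thesis by (elim disjE conjE) simp_all
  qed
next
  fix e assume "e \<in> {{(0::nat,0::nat),(1,0)},{(0,1),(2,0)},{(1,1),(2,1)}}"
  then show "e \<in> dcell1_cross 2" unfolding dcell1_cross_def
    apply (elim insertE)
    apply (rule CollectI, rule exI[of _ 0], rule exI[of _ 1], simp)
    apply (rule CollectI, rule exI[of _ 0], rule exI[of _ 2], simp)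
    apply (rule CollectI, rule exI[of _ 1], rule exI[of _ 2], simp)
    apply simp
    done
qed

lemma part1: "hamiltonian (dcell1_V 2) (dcell1_E 2)"
proof (rule cyc_ham[of "(0,0)" "(1,0)" "(1,1)" "(2,1)" "(2,0)" "(0,1)"])
  show "distinct [(0::nat, 0::nat), (1, 0), (1, 1), (2, 1), (2, 0), (0, 1)]" by simp
  show "dcell1_V 2 = set [(0, 0), (1, 0), (1, 1), (2, 1), (2, 0), (0, 1)]"
    unfolding V2 by auto
qed (simp_all add: dcell1_E_def cross2 intra_mem insert_commute)

lemma part2: "\<not> ham_connected (dcell1_V 2) (dcell1_E 2)"
proof (rule not_hc[of "(0,0)" _ "(1,1)" "(1,0)"])
  fix x assume x: "x \<noteq> (1::nat,0::nat)" "{x, (1, 0)} \<in> dcell1_E 2"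
  show "x = (0,0) \<or> x = (1,1)"
  proof (cases "{x, (1::nat, 0::nat)} \<in> dcell1_intra 2")
    case True
    then have "fst x = 1" "snd x < 2" by (simp_all add: intra_mem)
    with x(1) show ?thesis by (cases x) auto
  next
    case False
    then have "{x, (1::nat, 0::nat)} \<in> {{(0,0),(1,0)},{(0,1),(2,0)},{(1,1),(2,1)}}"
      using x(2) by (simp add: dcell1_E_def cross2)
    then show ?thesis using x(1) by (auto simp: doubleton_eq_iff)
  qed
qed (simp_all add: V2)


lemma gen_parts:
  assumes "gen_dcell1_cross n X"
  shows "X \<subseteq> {{u, v} | u v. u \<in> dcell1_V n \<and> v \<in> dcell1_V n \<and> fst u \<noteq> fst v}"
    "\<And>a b. a \<le> n \<Longrightarrow> b \<le> n \<Longrightarrow> a \<noteq> b \<Longrightarrow>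
        (\<exists>!e. e \<in> X \<and> (\<exists>u v. e = {u, v} \<and> fst u = a \<and> fst v = b))"
    "\<And>v. v \<in> dcell1_V n \<Longrightarrow> \<exists>!e. e \<in> X \<and> v \<in> e"
proof -
  have h: "X \<subseteq> {{u, v} | u v. u \<in> dcell1_V n \<and> v \<in> dcell1_V n \<and> fst u \<noteq> fst v} \<and>
     (\<forall>a b. a \<le> n \<and> b \<le> n \<and> a \<noteq> b \<longrightarrow>
        (\<exists>!e. e \<in> X \<and> (\<exists>u v. e = {u, v} \<and> fst u = a \<and> fst v = b))) \<and>
     (\<forall>v\<in>dcell1_V n. \<exists>!e. e \<in> X \<and> v \<in> e)"
    using assms unfolding gen_dcell1_cross_def .
  show "X \<subseteq> {{u, v} | u v. u \<in> dcell1_V n \<and> v \<in> dcell1_V n \<and> fst u \<noteq> fst v}"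
    using h by (rule conjunct1)
  show "\<And>a b. a \<le> n \<Longrightarrow> b \<le> n \<Longrightarrow> a \<noteq> b \<Longrightarrow>
        (\<exists>!e. e \<in> X \<and> (\<exists>u v. e = {u, v} \<and> fst u = a \<and> fst v = b))"
    using h[THEN conjunct2, THEN conjunct1] by simp
  show "\<And>v. v \<in> dcell1_V n \<Longrightarrow> \<exists>!e. e \<in> X \<and> v \<in> e"
    using h[THEN conjunct2, THEN conjunct2] by (rule bspec)
qed

lemma get_edge:
  assumes "gen_dcell1_cross 2 X" "a \<le> 2" "b \<le> 2" "a \<noteq> b"
  shows "\<exists>u v. {u,v} \<in> X \<and> fst u = a \<and> fst v = b \<and> u \<in> dcell1_V 2 \<and> v \<in> dcell1_V 2"
proof -
  from gen_parts(2)[OF assms] have "\<exists>e. e \<in> X \<and> (\<exists>u v. e = {u, v} \<and> fst u = a \<and> fst v = b)"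
    by (rule ex1_implies_ex)
  then obtain e u v where e: "e \<in> X" "e = {u,v}" "fst u = a" "fst v = b"
    by blast
  from gen_parts(1)[OF assms(1)] e(1) have "e \<in> {{u, v} | u v. u \<in> dcell1_V 2 \<and> v \<in> dcell1_V 2 \<and> fst u \<noteq> fst v}"
    by (rule subsetD)
  then obtain u' v' where "e = {u',v'}" "u' \<in> dcell1_V 2" "v' \<in> dcell1_V 2"
    by blast
  with e have "u \<in> dcell1_V 2" "v \<in> dcell1_V 2" by (auto simp: doubleton_eq_iff)
  with e show ?thesis by blast
qed

lemma uniq_edge:
  assumes "gen_dcell1_cross 2 X" "v \<in> dcell1_V 2" "e1 \<in> X" "e2 \<in> X" "v \<in> e1" "v \<in> e2"
  shows "e1 = e2"
proof -
  from gen_parts(3)[OF assms(1,2)] obtain e0 where "\<And>y. y \<in> X \<and> v \<in> y \<Longrightarrow> y = e0"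
    by (elim ex1E) blast
  then show ?thesis using assms(3-6) by metis
qed

lemma part3:
  assumes G: "gen_dcell1_cross 2 X"
  shows "hamiltonian (dcell1_V 2) (dcell1_intra 2 \<union> X) \<and>
          \<not> ham_connected (dcell1_V 2) (dcell1_intra 2 \<union> X)"
proof -
  obtain a b where ab: "{a,b} \<in> X" "fst a = 0" "fst b = 1" "a \<in> dcell1_V 2" "b \<in> dcell1_V 2"
    using get_edge[OF G, of 0 1] by auto
  obtain c d where cd: "{c,d} \<in> X" "fst c = 1" "fst d = 2" "c \<in> dcell1_V 2" "d \<in> dcell1_V 2"
    using get_edge[OF G, of 1 2] by auto
  obtain f g where fg: "{f,g} \<in> X" "fst f = 0" "fst g = 2" "f \<in> dcell1_V 2" "g \<in> dcell1_V 2"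
    using get_edge[OF G, of 0 2] by auto
  have bc: "b \<noteq> c"
  proof
    assume "b = c"
    then have "{a,b} = {c,d}" using uniq_edge[OF G ab(5) ab(1) cd(1)] by simp
    then have "a \<in> {c,d}" by blast
    with ab cd show False by auto
  qed
  have dg: "d \<noteq> g"
  proof
    assume "d = g"
    then have "{c,d} = {f,g}" using uniq_edge[OF G cd(5) cd(1) fg(1)] by simp
    then have "c \<in> {f,g}" by blast
    with cd fg show False by auto
  qed
  have fa: "f \<noteq> a"
  proof
    assume "f = a"
    then have "{f,g} = {a,b}" using uniq_edge[OF G fg(4) fg(1) ab(1)] by simp
    then have "g \<in> {a,b}" by blast
    with ab fg show False by auto
  qed
  have dist: "distinct [a,b,c,d,g,f]" using ab cd fg bc dg fa by auto
  have Veq: "dcell1_V 2 = set [a,b,c,d,g,f]"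
  proof -
    have sub: "set [a,b,c,d,g,f] \<subseteq> dcell1_V 2" using ab cd fg by auto
    have "card (set [a,b,c,d,g,f]) = 6" using distinct_card[OF dist] by simp
    then show ?thesis using card_subset_eq[OF _ sub] card_V2 unfolding V2 by simp
  qed
  let ?E = "dcell1_intra 2 \<union> X"
  have i1: "{b,c} \<in> ?E" using bc ab cd by (simp add: intra_mem inV)
  have i2: "{d,g} \<in> ?E" using dg cd fg by (simp add: intra_mem inV)
  have i3: "{f,a} \<in> ?E" using fa ab fg by (simp add: intra_mem inV)
  have x3: "{g,f} \<in> ?E" using fg(1) by (simp add: insert_commute)
  have H: "hamiltonian (dcell1_V 2) ?E"
    by (rule cyc_ham[OF dist Veq]) (use ab cd i1 i2 i3 x3 in auto)
  have N: "\<not> ham_connected (dcell1_V 2) ?E"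
  proof (rule not_hc[of a _ c b])
    show "a \<noteq> c" using ab cd by auto
    show "b \<noteq> a" using ab by auto
    show "4 \<le> card (dcell1_V 2)" using card_V2 by simp
    show "finite (dcell1_V 2)" unfolding V2 by simp
    fix x assume x: "x \<noteq> b" "{x,b} \<in> ?E"
    show "x = a \<or> x = c"
    proof (cases "{x,b} \<in> dcell1_intra 2")
      case True
      then have "fst x = 1" "snd x < 2" using ab by (simp_all add: intra_mem)
      moreover have "snd b < 2" "snd c < 2" using ab cd by (simp_all add: inV)
      moreover have "snd x \<noteq> snd b" "snd c \<noteq> snd b"
        using x(1) bc \<open>fst x = 1\<close> ab(3) cd(2) by (auto simp: prod_eq_iff)
      ultimately have "x = c" using cd(2) by (auto simp: prod_eq_iff)
      then show ?thesis by simp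
    next
      case False
      then have "{x,b} \<in> X" using x(2) by simp
      then have "{x,b} = {a,b}" using uniq_edge[OF G ab(5) _ ab(1)] by simp
      then show ?thesis using x(1) by (auto simp: doubleton_eq_iff)
    qed
  qed (use ab cd bc in auto)
  show ?thesis using H N by simp
qed

theorem lemma2:
  shows "hamiltonian (dcell1_V 2) (dcell1_E 2) \<and> \<not> ham_connected (dcell1_V 2) (dcell1_E 2)
    \<and> (\<forall>X. gen_dcell1_cross 2 X \<longrightarrow>
          hamiltonian (dcell1_V 2) (dcell1_intra 2 \<union> X) \<and>
          \<not> ham_connected (dcell1_V 2) (dcell1_intra 2 \<union> X))"
  using part1 part2 part3 by blast

end
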